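(* Let $\lambda>0$, $\omega_0\ne0$ with $\omega_0^2/(2\lambda)<2$, $e=1-\omega_0^2/(2\lambda)$, and let $\tilde{\mathbf r}_\lambda(t,\omega_0)$ be the trajectory defined in the context. Then for every $t\ge0$, with $\varphi=\varphi(t)$ and $f(\varphi),T(\varphi),b(\varphi)$ the cohesion, kinetic energy and root-mean-square size of the system at time $t$, $$f(\varphi)=\frac{C(\mathbf m)}{b(\varphi)\sqrt{\sum_jm_j}},\qquad T(\varphi)=\frac{C(\mathbf m)}{2b(\varphi)\sqrt{\sum_jm_j}}\cdot\frac{1+e^2-2e\cos\varphi}{1-e\cos\varphi}.$$
   Context: Fix $N\ge2$, masses $\mathbf m=(m_1,\dots,m_N)$, $m_i>0$, $\gamma>0$. Planar configuration space $\mathfrak R=\{\mathbf r=(\mathbf r_1,\dots,\mathbf r_N)\in(\mathbb R^2)^N:\ \mathbf r_i\neq\mathbf r_j \text{ for } i\neq j\}$; cohesion $f(\mathbf r)=\sum_{i<j}\frac{\gamma m_im_j}{|\mathbf r_j-\mathbf r_i|}$; $g(\mathbf r)=\sum_i m_i|\mathbf r_i|^2$; root-mean-square size $b(\mathbf r)=\sqrt{g(\mathbf r)/\sum_jm_j}$; kinetic energy $T=\frac12\sum_j m_j|\dot{\mathbf r}_j|^2$; $C(\mathbf m)=\min\{f(\mathbf r):\mathbf r\in\mathfrak R,\ g(\mathbf r)=1\}$. Let $\mathbf r_\lambda=(\mathbf r_{1\lambda},\dots,\mathbf r_{N\lambda})$ be a global minimizer of $f+\lambda g$ on $\mathfrak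 R$; identify $\mathbb R^2$ with $\mathbb C$, $z_{j\lambda}\leftrightarrow\mathbf r_{j\lambda}$. Put $a(\varphi)=(1-e)/(1-e\cos\varphi)$ and define $\varphi(t)$ by $\omega_0t=\int_0^{\varphi(t)}\frac{(1-e)^2\,d\alpha}{(1-e\cos\alpha)^2}$. The trajectory $\tilde{\mathbf r}_\lambda(t,\omega_0)$ has $j$-th particle at complex position $z_{j\lambda}a(\varphi(t))e^{i\varphi(t)}$; it solves the planar Newtonian $N$-body equations $m_j\ddot{\mathbf r}_j=\sum_{k\ne j}\gamma m_jm_k(\mathbf r_k-\mathbf r_j)/|\mathbf r_k-\mathbf r_j|^3$. *)

theory Defs
  imports "HOL-Analysis.Analysis"
begin

definition config :: "nat \<Rightarrow> (nat \<Rightarrow> complex) \<Rightarrow> bool" where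
  "config N r \<longleftrightarrow> (\<forall>i<N. \<forall>j<N. i \<noteq> j \<longrightarrow> r i \<noteq> r j)"

definition cohesion :: "nat \<Rightarrow> (nat \<Rightarrow> real) \<Rightarrow> real \<Rightarrow> (nat \<Rightarrow> complex) \<Rightarrow> real" where
  "cohesion N m \<gamma> r = (\<Sum>j<N. \<Sum>i<j. \<gamma> * m i * m j / cmod (r j - r i))"

definition moment :: "nat \<Rightarrow> (nat \<Rightarrow> real) \<Rightarrow> (nat \<Rightarrow> complex) \<Rightarrow> real" where
  "moment N m r = (\<Sum>i<N. m i * (cmod (r i))^2)"

definition rms_size :: "nat \<Rightarrow> (nat \<Rightarrow> real) \<Rightarrow> (nat \<Rightarrow> complex) \<Rightarrow> real" where
  "rms_size N m r = sqrt (moment N m r / (\<Sum>j<N. m j))"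

definition Cmin :: "nat \<Rightarrow> (nat \<Rightarrow> real) \<Rightarrow> real \<Rightarrow> real" where
  "Cmin N m \<gamma> = Inf {cohesion N m \<gamma> r | r. config N r \<and> moment N m r = 1}"

definition kinetic :: "nat \<Rightarrow> (nat \<Rightarrow> real) \<Rightarrow> (real \<Rightarrow> nat \<Rightarrow> complex) \<Rightarrow> real \<Rightarrow> real" where
  "kinetic N m q t = (1/2) * (\<Sum>j<N. m j * (cmod (vector_derivative (\<lambda>s. q s j) (at t)))^2)"

definition kepler_Phi :: "real \<Rightarrow> real \<Rightarrow> real" where
  "kepler_Phi e x =
     (if 0 \<le> x then integral {0..x} (\<lambda>\<alpha>. (1 - e)^2 / (1 - e * cos \<alpha>)^2)
      else - integral {x..0} (\<lambda>\<alpha>. (1 - e)^2 / (1 - e * cos \<alpha>)^2))"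

definition kepler_phi :: "real \<Rightarrow> real \<Rightarrow> real \<Rightarrow> real" where
  "kepler_phi e \<omega>0 t = (THE \<phi>. \<omega>0 * t = kepler_Phi e \<phi>)"

definition kepler_a :: "real \<Rightarrow> real \<Rightarrow> real" where
  "kepler_a e \<phi> = (1 - e) / (1 - e * cos \<phi>)"

definition traj :: "real \<Rightarrow> real \<Rightarrow> (nat \<Rightarrow> complex) \<Rightarrow> real \<Rightarrow> nat \<Rightarrow> complex" where
  "traj e \<omega>0 z t j =
     z j * complex_of_real (kepler_a e (kepler_phi e \<omega>0 t)) * exp (\<i> * complex_of_real (kepler_phi e \<omega>0 t))"

end

theory Submission
  imports Defs
begin

definition kF :: "real \<Rightarrow> real \<Rightarrow> real" where
  "kF e x = (1 - e)^2 / (1 - e * cos x)^2"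

lemma den_pos: fixes e x :: real assumes "\<bar>e\<bar> < 1" shows "1 - e * cos x > 0"
proof -
  have "\<bar>e * cos x\<bar> \<le> \<bar>e\<bar>" using abs_cos_le_one[of x]
    by (simp add: abs_mult mult_left_le)
  then show ?thesis using assms by linarith
qed

lemma kF_cont: assumes "\<bar>e\<bar> < 1" shows "continuous_on S (kF e)"
  unfolding kF_def using den_pos[OF assms]
  by (intro continuous_intros) (auto simp: less_imp_neq[symmetric])

lemma kF_pos: assumes "\<bar>e\<bar> < 1" shows "kF e x > 0"
  unfolding kF_def using den_pos[OF assms, of x] assms by auto

lemma kF_lower: fixes e x :: real assumes "\<bar>e\<bar> < 1" shows "kF e x \<ge> (1-e)^2/4"
proof -
  have b: "\<bar>e * cos x\<bar> \<le> \<bar>e\<bar>" using abs_cos_le_one[of x]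
    by (simp add: abs_mult mult_left_le)
  have d: "0 < 1 - e * cos x" "1 - e * cos x \<le> 2"
    using den_pos[OF assms, of x] b assms by auto
  have "(1 - e * cos x)^2 \<le> 4" using d power_mono[of "1 - e * cos x" 2 2] by simp
  then show ?thesis unfolding kF_def using d
    by (intro divide_left_mono) auto
qed

lemma Phi_alt:
  assumes "\<bar>e\<bar> < 1" "c \<le> 0" "c \<le> y"
  shows "kepler_Phi e y = integral {c..y} (kF e) - integral {c..0} (kF e)"
proof -
  have int: "\<And>a b. kF e integrable_on {a..b}"
    by (rule integrable_continuous_interval[OF kF_cont[OF assms(1)]])
  have eq: "(\<lambda>\<alpha>. (1 - e)^2 / (1 - e * cos \<alpha>)^2) = kF e" by (simp add: kF_def fun_eq_iff)
  show ?thesis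
  proof (cases "0 \<le> y")
    case True
    then show ?thesis unfolding kepler_Phi_def eq
      using Henstock_Kurzweil_Integration.integral_combine[OF assms(2) True int[of c y]] by simp
  next
    case False
    then show ?thesis unfolding kepler_Phi_def eq
      using Henstock_Kurzweil_Integration.integral_combine[OF assms(3) _ int[of c 0]] by simp
  qed
qed

lemma Phi_deriv: assumes "\<bar>e\<bar> < 1" shows "DERIV (kepler_Phi e) x :> kF e x"
proof -
  define c where "c = min (x - 1) (-1)"
  have d1: "((\<lambda>y. integral {c..y} (kF e)) has_real_derivative kF e x) (at x within {c..x+1})"
    by (rule integral_has_real_derivative[OF kF_cont[OF assms]]) (auto simp: c_def)
  have "((\<lambda>y. integral {c..y} (kF e)) has_real_derivative kF e x) (at x)"
    using d1 at_within_interior[of x "{c..x+1}"] by (auto simp: c_def)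
  then have "((\<lambda>y. integral {c..y} (kF e) - integral {c..0} (kF e)) has_real_derivative kF e x) (at x)"
    by (auto intro: derivative_eq_intros)
  then show ?thesis
    by (rule has_field_derivative_transform_within_open[where S="{c<..}"])
       (use Phi_alt[OF assms, of c] in \<open>auto simp: c_def\<close>)
qed

lemma Phi_cont: assumes "\<bar>e\<bar> < 1" shows "isCont (kepler_Phi e) x"
  using Phi_deriv[OF assms] DERIV_isCont by blast

lemma Phi_strict: assumes "\<bar>e\<bar> < 1" "a < b" shows "kepler_Phi e a < kepler_Phi e b"
  using DERIV_pos_imp_increasing[OF assms(2)] Phi_deriv[OF assms(1)] kF_pos[OF assms(1)] by blast

lemma Phi_0: "kepler_Phi e 0 = 0" by (simp add: kepler_Phi_def)

lemma Phi_ge: assumes "\<bar>e\<bar> < 1" "0 \<le> x" shows "kepler_Phi e x \<ge> (1-e)^2/4 * x"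
proof (cases "x = 0")
  case False
  then have "0 < x" using assms by simp
  from MVT2[OF this, of "kepler_Phi e" "kF e"] Phi_deriv[OF assms(1)]
  obtain z where "kepler_Phi e x - kepler_Phi e 0 = (x - 0) * kF e z" by blast
  then show ?thesis using kF_lower[OF assms(1), of z] \<open>0 < x\<close> by (simp add: Phi_0 mult.commute)
next
  case True then show ?thesis by (simp add: Phi_0)
qed

lemma Phi_le: assumes "\<bar>e\<bar> < 1" "x \<le> 0" shows "kepler_Phi e x \<le> (1-e)^2/4 * x"
proof (cases "x = 0")
  case False
  then have "x < 0" using assms by simp
  from MVT2[OF this, of "kepler_Phi e" "kF e"] Phi_deriv[OF assms(1)]
  obtain z where "kepler_Phi e 0 - kepler_Phi e x = (0 - x) * kF e z" by blast
  then show ?thesis using kF_lower[OF assms(1), of z] \<open>x < 0\<close>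
    by (simp add: Phi_0)
next
  case True then show ?thesis by (simp add: Phi_0)
qed

lemma Phi_surj: assumes "\<bar>e\<bar> < 1" shows "\<exists>x. kepler_Phi e x = v"
proof -
  define c where "c = (1-e)^2/4"
  have c: "c > 0" using assms by (auto simp: c_def)
  define B where "B = \<bar>v\<bar>/c + 1"
  have B: "B > 0" "c * B \<ge> \<bar>v\<bar>" using c by (auto simp: B_def field_simps)
  have "kepler_Phi e (-B) \<le> v" using Phi_le[OF assms, of "-B"] B unfolding c_def[symmetric] by auto
  moreover have "v \<le> kepler_Phi e B" using Phi_ge[OF assms, of "B"] B unfolding c_def[symmetric] by auto
  ultimately show ?thesis using IVT[of "kepler_Phi e" "-B" v B] Phi_cont[OF assms] B by auto
qed

lemma Phi_inj: assumes "\<bar>e\<bar> < 1" "kepler_Phi e x = kepler_Phi e y" shows "x = y"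
  using Phi_strict[OF assms(1), of x y] Phi_strict[OF assms(1), of y x] assms(2)
  by (cases x y rule: linorder_cases) auto

definition kinv where "kinv e v = (THE x. v = kepler_Phi e x)"

lemma kinv: assumes "\<bar>e\<bar> < 1" shows "kepler_Phi e (kinv e v) = v"
proof -
  obtain x where x: "kepler_Phi e x = v" using Phi_surj[OF assms] by blast
  have "kinv e v = x" unfolding kinv_def
    by (rule the_equality) (use x Phi_inj[OF assms] in auto)
  then show ?thesis using x by simp
qed

lemma kinv2: assumes "\<bar>e\<bar> < 1" shows "kinv e (kepler_Phi e x) = x"
  using kinv[OF assms] Phi_inj[OF assms] by blast

lemma kinv_deriv: assumes "\<bar>e\<bar> < 1" shows "DERIV (kinv e) v :> inverse (kF e (kinv e v))"
proof (rule DERIV_inverse_function[where f="kepler_Phi e" and a="v-1" and b="v+1"])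
  show "DERIV (kepler_Phi e) (kinv e v) :> kF e (kinv e v)" by (rule Phi_deriv[OF assms])
  show "kF e (kinv e v) \<noteq> 0" using kF_pos[OF assms] by (metis less_irrefl)
  show "isCont (kinv e) v"
    using isCont_inverse_function[of 1 "kinv e v" "kinv e" "kepler_Phi e"] kinv2[OF assms]
      Phi_cont[OF assms] kinv[OF assms] by auto
qed (auto simp: kinv[OF assms])

lemma kepler_phi_eq: assumes "\<bar>e\<bar> < 1" shows "kepler_phi e w t = kinv e (w * t)"
  unfolding kepler_phi_def kinv_def by simp


lemma config_scale: assumes "c \<noteq> 0" "config N z" shows "config N (\<lambda>j. c * z j)"
  using assms unfolding config_def by auto

lemma cohesion_scale: assumes "c \<noteq> 0"
  shows "cohesion N m \<gamma> (\<lambda>j. c * z j) = cohesion N m \<gamma> z / cmod c"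
proof -
  have "\<And>i j. c * z j - c * z i = c * (z j - z i)" by (simp add: algebra_simps)
  then show ?thesis unfolding cohesion_def
    by (simp add: norm_mult sum_divide_distrib) (simp add: mult.commute)
qed

lemma moment_scale: "moment N m (\<lambda>j. c * z j) = (cmod c)^2 * moment N m z"
  unfolding moment_def by (simp add: norm_mult sum_distrib_left power_mult_distrib algebra_simps)

lemma moment_pos: assumes "N \<ge> 2" "\<forall>i<N. m i > 0" "config N z" shows "moment N m z > 0"
proof -
  have "z 0 \<noteq> z 1" using assms unfolding config_def by auto
  have "\<exists>k<N. z k \<noteq> 0"
  proof (cases "z 0 = 0")
    case True
    then show ?thesis using \<open>z 0 \<noteq> z 1\<close> assms(1) by (intro exI[of _ 1]) auto
  next
    case False
    then show ?thesis using assms(1) by (intro exI[of _ 0]) auto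
  qed
  then obtain k where k: "k < N" "z k \<noteq> 0" by blast
  have "m k * (cmod (z k))^2 > 0" using k assms(2) by auto
  also have "m k * (cmod (z k))^2 \<le> moment N m z" unfolding moment_def
    by (rule member_le_sum[where f="\<lambda>i. m i * (cmod (z i))^2"]) (use k assms(2) in \<open>auto intro: less_imp_le\<close>)
  finally show ?thesis .
qed

lemma aux_field: fixes d :: complex assumes "d \<noteq> 0" shows
  "(E * \<i> * (Z * c) * d - Z * c * E * (s * ee)) / (d * d) = Z * (c * (\<i> * E) / d - c * ee * s * E / d^2)"
  using assms by (simp add: field_simps power2_eq_square)

lemma aux2: fixes e s co :: real and E Z :: complex assumes "1 - e*co \<noteq> 0" shows
"Z * ((of_real (-(1-e)*e * s/(1-e*co)^2) + \<i> * of_real ((1-e)/(1-e*co))) * E) = Z * ((1 - of_real e) * (\<i> * E) / (1 - of_real e * of_real co) - (1 - of_real e) * of_real e * of_real s * E / (1 - of_real e * of_real co)^2)"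
proof -
  have d: "1 - complex_of_real e * of_real co \<noteq> 0" using assms
    by (metis of_real_1 of_real_diff of_real_eq_0_iff of_real_mult)
  have "complex_of_real (-(1-e)*e * s/(1-e*co)^2) = -(1-of_real e) * of_real e * of_real s/(1-of_real e * of_real co)^2"
       "complex_of_real ((1-e)/(1-e*co)) = (1 - of_real e)/(1-of_real e * of_real co)" by simp_all
  then show ?thesis using d by (simp add: field_simps)
qed

lemma dK_lemma:
  fixes zj :: complex and e :: real and x :: complex
  assumes nz: "1 - complex_of_real e * cos x \<noteq> 0"
  shows "((\<lambda>x. zj * (of_real (1-e) / (1 - of_real e * cos x)) * exp (\<i> * x)) has_field_derivative
       zj * ((1 - complex_of_real e) * (\<i> * exp (\<i> * x)) / (1 - complex_of_real e * cos x) -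
      (1 - complex_of_real e) * complex_of_real e * sin x * exp (\<i> * x) / (1 - complex_of_real e * cos x)\<^sup>2)) (at x)"
  using nz
  apply (auto intro!: derivative_eq_intros)
  apply (rule aux_field)
  apply (insert nz)
  apply simp
  done

lemma traj_vd:
  fixes e w t :: real
  assumes e: "\<bar>e\<bar> < 1"
  defines "\<phi> \<equiv> kepler_phi e w t"
  shows "vector_derivative (\<lambda>s. traj e w z s j) (at t) =
     z j * (of_real (w * inverse (kF e \<phi>)) * (of_real (-(1-e)*e * sin \<phi>/(1-e * cos \<phi>)^2)
        + \<i> * of_real ((1-e)/(1-e * cos \<phi>))) * exp(\<i> * of_real \<phi>))"
proof -
  define p where "p s = kinv e (w * s)" for s
  have pphi: "p t = \<phi>" unfolding p_def \<phi>_def kepler_phi_eq[OF e] ..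
  have dl: "((\<lambda>s. w * s) has_real_derivative w) (at t)"
    by (auto intro!: derivative_eq_intros)
  have dp: "DERIV p t :> w * inverse (kF e \<phi>)"
    unfolding p_def using DERIV_chain2[OF kinv_deriv[OF e] dl]
    by (simp add: pphi[symmetric] p_def mult.commute)
  have P: "((\<lambda>s. complex_of_real (p s)) has_vector_derivative of_real (w * inverse (kF e \<phi>))) (at t)"
    by (rule has_vector_derivative_of_real[OF dp])
  define K where "K = (\<lambda>x::complex. z j * (of_real (1-e) / (1 - of_real e * cos x)) * exp (\<i> * x))"
  have d0: "1 - complex_of_real e * cos (of_real \<phi>) = of_real (1 - e * cos \<phi>)"
    by (simp add: cos_of_real)
  have dpos: "1 - e * cos \<phi> > 0" using den_pos[OF e] .
  have nz: "1 - complex_of_real e * cos (of_real \<phi>) \<noteq> 0" by (metis d0 dpos of_real_eq_0_iff order_less_irrefl)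
  have dK: "(K has_field_derivative
       z j * ((of_real (-(1-e)*e * sin \<phi>/(1-e * cos \<phi>)^2)
        + \<i> * of_real ((1-e)/(1-e * cos \<phi>))) * exp(\<i> * of_real \<phi>))) (at (of_real \<phi>))"
  proof -
    have eq: "z j * ((of_real (-(1-e)*e * sin \<phi>/(1-e * cos \<phi>)^2)
        + \<i> * of_real ((1-e)/(1-e * cos \<phi>))) * exp(\<i> * of_real \<phi>)) =
       z j * ((1 - complex_of_real e) * (\<i> * exp (\<i> * of_real \<phi>)) / (1 - complex_of_real e * cos (of_real \<phi>)) -
      (1 - complex_of_real e) * complex_of_real e * sin (of_real \<phi>) * exp (\<i> * of_real \<phi>) / (1 - complex_of_real e * cos (of_real \<phi>))\<^sup>2)"
      unfolding sin_of_real cos_of_real by (rule aux2) (use dpos in simp)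
    show ?thesis unfolding K_def eq by (rule dK_lemma[OF nz])
  qed
  have "((K \<circ> (\<lambda>s. complex_of_real (p s))) has_vector_derivative
     of_real (w * inverse (kF e \<phi>)) * (z j * ((of_real (-(1-e)*e * sin \<phi>/(1-e * cos \<phi>)^2)
        + \<i> * of_real ((1-e)/(1-e * cos \<phi>))) * exp(\<i> * of_real \<phi>)))) (at t)"
    by (rule field_vector_diff_chain_at[OF P]) (unfold pphi, rule dK)
  moreover have "(K \<circ> (\<lambda>s. complex_of_real (p s))) = (\<lambda>s. traj e w z s j)"
    unfolding traj_def K_def p_def kepler_phi_eq[OF e] kepler_a_def
    by (simp add: fun_eq_iff cos_of_real)
  ultimately have "((\<lambda>s. traj e w z s j) has_vector_derivative
     of_real (w * inverse (kF e \<phi>)) * (z j * ((of_real (-(1-e)*e * sin \<phi>/(1-e * cos \<phi>)^2)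
        + \<i> * of_real ((1-e)/(1-e * cos \<phi>))) * exp(\<i> * of_real \<phi>)))) (at t)" by (simp only:)
  then have "vector_derivative (\<lambda>s. traj e w z s j) (at t) = of_real (w * inverse (kF e \<phi>)) * (z j * ((of_real (-(1-e)*e * sin \<phi>/(1-e * cos \<phi>)^2)
        + \<i> * of_real ((1-e)/(1-e * cos \<phi>))) * exp(\<i> * of_real \<phi>)))"
    by (rule vector_derivative_at)
  then show ?thesis by (simp only: mult.assoc mult.left_commute[of "of_real (w * inverse (kF e \<phi>))" "z j"])
qed


lemma alg_identity:
  fixes e w u sn :: real
  assumes d: "1 - e*u > 0" and e1: "1 - e \<noteq> 0" and sc: "sn^2 + u^2 = 1"
  shows "(w * inverse ((1 - e)^2 / (1 - e*u)^2))^2 *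
     ((-(1-e)*e * sn/(1-e*u)^2)^2 + ((1-e)/(1-e*u))^2) = w^2/(1-e)^2 * (1 + e^2 - 2*e*u)"
proof -
  define c where "c = 1 - e"
  define d where "d = 1 - e*u"
  have c0: "c \<noteq> 0" and d0: "d \<noteq> 0" using d e1 by (auto simp: c_def d_def)
  have 1: "(w * inverse (c^2/d^2))^2 = w^2 * d^2 * d^2 / (c^2 * c^2)"
    by (simp add: power_mult_distrib power_divide power_inverse field_simps power2_eq_square)
  have 2: "(-c*e * sn/d^2)^2 + (c/d)^2 = c^2 * (e^2 * sn^2 + d^2)/(d^2 * d^2)"
    using d0 by (simp add: field_simps power2_eq_square)
  have 3: "e^2 * sn^2 + d^2 = 1 + e^2 - 2*e*u"
  proof -
    have s2: "sn^2 = 1 - u^2" using sc by simp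
    show ?thesis unfolding d_def s2 by (simp add: power2_eq_square algebra_simps)
  qed
  have "(w * inverse (c^2/d^2))^2 * ((-c*e * sn/d^2)^2 + (c/d)^2) = w^2/c^2 * (e^2 * sn^2 + d^2)"
    unfolding 1 2 using c0 d0 by (simp add: field_simps power2_eq_square)
  from this[unfolded 3] show ?thesis unfolding c_def d_def .
qed

lemma fin_alg: fixes g lam c d w X :: real assumes "d>0" "c>0" "w^2 = 2*lam*c"
  shows "1/2*(g*(w^2/c^2*X)) = (2*lam*g)/(2*(c/d)) * (X/d)"
  using assms(1,2) unfolding assms(3) by (simp add: field_simps power2_eq_square)
lemma canc: fixes f s A :: real assumes "s > 0" "A > 0" shows "f * s / (2 * (A * s)) = f / (2 * A)"
  using assms by simp
lemma rmsl: fixes A g M :: real assumes "A > 0" "g > 0" "M > 0" shows "sqrt (A^2 * g / M) * sqrt M = A * sqrt g"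
proof -
  have "sqrt (A^2 * g / M) * sqrt M = sqrt (A^2 * g / M * M)" by (rule real_sqrt_mult[symmetric])
  also have "\<dots> = sqrt (A^2 * g)" using assms by simp
  also have "\<dots> = A * sqrt g" using assms by (simp add: real_sqrt_mult)
  finally show ?thesis .
qed
lemma cm2: "cmod (complex_of_real a + \<i> * complex_of_real b) ^ 2 = a^2 + b^2"
  by (simp add: cmod_power2)

theorem theorem8p3:
  fixes N :: nat and m :: "nat \<Rightarrow> real" and \<gamma> lam \<omega>0 e t :: real
    and z :: "nat \<Rightarrow> complex"
  assumes N: "N \<ge> 2"
    and m_pos: "\<forall>i<N. m i > 0"
    and \<gamma>_pos: "\<gamma> > 0"
    and lam_pos: "lam > 0"
    and \<omega>0_nz: "\<omega>0 \<noteq> 0"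
    and \<omega>0_small: "\<omega>0^2 / (2 * lam) < 2"
    and e_def: "e = 1 - \<omega>0^2 / (2 * lam)"
    and z_config: "config N z"
    and z_min: "\<forall>w. config N w \<longrightarrow>
                   cohesion N m \<gamma> z + lam * moment N m z \<le> cohesion N m \<gamma> w + lam * moment N m w"
    and t_nonneg: "t \<ge> 0"
  shows "(cohesion N m \<gamma> (traj e \<omega>0 z t)
           = Cmin N m \<gamma> / (rms_size N m (traj e \<omega>0 z t) * sqrt (\<Sum>j<N. m j)))
         \<and> (kinetic N m (traj e \<omega>0 z) t
           = Cmin N m \<gamma> / (2 * rms_size N m (traj e \<omega>0 z t) * sqrt (\<Sum>j<N. m j))
             * ((1 + e^2 - 2 * e * cos (kepler_phi e \<omega>0 t)) / (1 - e * cos (kepler_phi e \<omega>0 t))))"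
proof -
  have q0: "\<omega>0^2 / (2 * lam) > 0" using \<omega>0_nz lam_pos by simp
  have ome: "1 - e = \<omega>0^2 / (2 * lam)" using e_def by simp
  have e: "\<bar>e\<bar> < 1" unfolding abs_less_iff using ome q0 \<omega>0_small by linarith
  have e1: "1 - e > 0" using ome q0 by simp
  define f where "f = cohesion N m \<gamma> z"
  define g where "g = moment N m z"
  define M where "M = (\<Sum>j<N. m j)"
  have gpos: "g > 0" unfolding g_def by (rule moment_pos[OF N m_pos z_config])
  have Mpos: "M > 0" unfolding M_def using N m_pos by (intro sum_pos) (auto simp: lessThan_empty_iff)
  have fg: "f = 2 * lam * g"
  proof -
    define h where "h s = f / s + lam * s^2 * g" for s :: real
    have dh: "DERIV h 1 :> (- f + 2 * lam * g)"
      unfolding h_def by (auto intro!: derivative_eq_intros)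
    have "\<forall>y. \<bar>1 - y\<bar> < 1/2 \<longrightarrow> h 1 \<le> h y"
    proof (intro allI impI)
      fix y :: real assume "\<bar>1 - y\<bar> < 1/2"
      then have y: "y > 0" using abs_less_iff[of "1 - y" "1/2"] by linarith
      have c: "complex_of_real y \<noteq> 0" using y by simp
      have "f + lam * g \<le> cohesion N m \<gamma> (\<lambda>j. of_real y * z j) + lam * moment N m (\<lambda>j. of_real y * z j)"
        using z_min config_scale[OF c z_config] unfolding f_def g_def by blast
      also have "\<dots> = h y" unfolding h_def f_def g_def cohesion_scale[OF c] moment_scale
        using y by simp
      finally show "h 1 \<le> h y" by (simp add: h_def)
    qed
    from DERIV_local_min[OF dh _ this] show ?thesis by simp
  qed
  have Cm: "Cmin N m \<gamma> = f * sqrt g"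
    unfolding Cmin_def
  proof (rule cInf_eq_minimum)
    define c where "c = complex_of_real (inverse (sqrt g))"
    have c: "c \<noteq> 0" "cmod c = inverse (sqrt g)"
      using gpos unfolding c_def norm_of_real by auto
    have m1: "moment N m (\<lambda>j. c * z j) = 1"
    proof -
      have "moment N m (\<lambda>j. c * z j) = (inverse (sqrt g))^2 * g"
        unfolding moment_scale c(2) g_def ..
      also have "\<dots> = 1" using gpos by (simp add: power_inverse)
      finally show ?thesis .
    qed
    have c1: "cohesion N m \<gamma> (\<lambda>j. c * z j) = f * sqrt g"
      unfolding cohesion_scale[OF c(1)] c(2) f_def by (simp add: divide_inverse)
    show "f * sqrt g \<in> {cohesion N m \<gamma> r |r. config N r \<and> moment N m r = 1}"
      unfolding mem_Collect_eq
      using config_scale[OF c(1) z_config] m1 c1 by (intro exI[of _ "\<lambda>j. c * z j"]) simp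
  next
    fix x assume "x \<in> {cohesion N m \<gamma> r |r. config N r \<and> moment N m r = 1}"
    then obtain r where r: "x = cohesion N m \<gamma> r" "config N r" "moment N m r = 1" by blast
    define c where "c = complex_of_real (sqrt g)"
    have c: "c \<noteq> 0" "cmod c = sqrt g"
      using gpos unfolding c_def norm_of_real by auto
    have "f + lam * g \<le> cohesion N m \<gamma> (\<lambda>j. c * r j) + lam * moment N m (\<lambda>j. c * r j)"
      using z_min config_scale[OF c(1) r(2)] unfolding f_def g_def by blast
    also have "\<dots> = x / sqrt g + lam * g"
      unfolding cohesion_scale[OF c(1)] moment_scale c(2) r(3) r(1)[symmetric] using gpos by simp
    finally have "f \<le> x / sqrt g" by simp
    then show "f * sqrt g \<le> x" using gpos by (simp add: field_simps)
  qed
  define \<phi> where "\<phi> = kepler_phi e \<omega>0 t"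
  define A where "A = kepler_a e \<phi>"
  have dpos: "1 - e * cos \<phi> > 0" by (rule den_pos[OF e])
  have Apos: "A > 0" unfolding A_def kepler_a_def using dpos e1 by simp
  define c where "c = complex_of_real A * exp (\<i> * complex_of_real \<phi>)"
  have c: "c \<noteq> 0" "cmod c = A" using Apos by (auto simp: c_def norm_mult)
  have tr: "traj e \<omega>0 z t = (\<lambda>j. c * z j)"
    unfolding traj_def c_def A_def \<phi>_def by (simp add: fun_eq_iff algebra_simps)
  have coh: "cohesion N m \<gamma> (traj e \<omega>0 z t) = f / A"
    unfolding tr cohesion_scale[OF c(1)] c f_def ..
  have rms: "rms_size N m (traj e \<omega>0 z t) * sqrt M = A * sqrt g"
    unfolding rms_size_def tr moment_scale c M_def[symmetric] g_def[symmetric]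
    by (rule rmsl[OF Apos gpos Mpos])
  have part1: "cohesion N m \<gamma> (traj e \<omega>0 z t)
           = Cmin N m \<gamma> / (rms_size N m (traj e \<omega>0 z t) * sqrt M)"
    unfolding coh Cm rms using gpos by simp
  define D where "D = \<omega>0 * inverse (kF e \<phi>)"
  define Ad where "Ad = -(1-e)*e * sin \<phi>/(1-e * cos \<phi>)^2"
  have A': "A = (1-e)/(1-e * cos \<phi>)" unfolding A_def kepler_a_def ..
  have vd: "\<And>j. cmod (vector_derivative (\<lambda>s. traj e \<omega>0 z s j) (at t)) ^ 2
      = (cmod (z j))^2 * (D^2 * (Ad^2 + A^2))"
  proof -
    fix j
    have n1: "cmod (exp (\<i> * complex_of_real \<phi>)) = 1" by (rule norm_exp_i_times)
    show "cmod (vector_derivative (\<lambda>s. traj e \<omega>0 z s j) (at t)) ^ 2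
      = (cmod (z j))^2 * (D^2 * (Ad^2 + A^2))"
      unfolding traj_vd[OF e] \<phi>_def[symmetric] D_def[symmetric] Ad_def[symmetric] A'[symmetric]
        norm_mult n1 power_mult_distrib cm2 norm_of_real power2_abs
      by simp
  qed
  have kin: "kinetic N m (traj e \<omega>0 z) t = 1/2 * (g * (D^2 * (Ad^2 + A^2)))"
    unfolding kinetic_def vd g_def moment_def
    by (simp add: sum_distrib_right mult.assoc)
  have DA: "D^2 * (Ad^2 + A^2) = \<omega>0^2/(1-e)^2 * (1 + e^2 - 2*e * cos \<phi>)"
    unfolding D_def Ad_def A' kF_def
    by (rule alg_identity) (use dpos e1 in auto)
  have part2: "kinetic N m (traj e \<omega>0 z) t
           = Cmin N m \<gamma> / (2 * rms_size N m (traj e \<omega>0 z t) * sqrt M)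
             * ((1 + e^2 - 2 * e * cos \<phi>) / (1 - e * cos \<phi>))"
  proof -
    have "Cmin N m \<gamma> / (2 * rms_size N m (traj e \<omega>0 z t) * sqrt M)
        = Cmin N m \<gamma> / (2 * (rms_size N m (traj e \<omega>0 z t) * sqrt M))"
      by (simp only: mult.assoc)
    also have "\<dots> = f / (2 * A)" unfolding rms Cm
      by (rule canc) (use gpos Apos in auto)
    finally have L: "Cmin N m \<gamma> / (2 * rms_size N m (traj e \<omega>0 z t) * sqrt M) = f / (2 * A)" .
    have w2: "\<omega>0^2 = 2 * lam * (1 - e)" using ome lam_pos by simp
    show ?thesis unfolding kin DA L unfolding fg A'
      by (rule fin_alg[OF dpos e1 w2])
  qed
  show ?thesis using part1 part2 unfolding M_def \<phi>_def by simp
qed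

end
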